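(* For each $0\le m<N$ there exists a total ordering $\leqslant_m$ on the real vector space $\mathbb R\Phi$, compatible with its vector space structure, such that $\gamma_i>_m0$ for $i\le m$ and $\gamma_i<_m0$ for $i>m$.
   Context: Let $\Phi$ be a finite indecomposable root system spanning the real vector space $\mathbb R\Phi$, with simple roots $\Pi$, positive roots $\Phi^+$, $N=|\Phi^+|$, Weyl group $W$ with longest element $w_0$. Fix a reduced expression $w_0=s_{\beta_1}\cdots s_{\beta_N}$ with $\beta_i\in\Pi$, set $w_i=s_{\beta_1}\cdots s_{\beta_{i-1}}$ and $\gamma_i=w_i(\beta_i)$, so that $\Phi^+=\{\gamma_1,\dots,\gamma_N\}$ is a convex ordering (if $\gamma_i+\gamma_j=\gamma_l$ with $i<j$ then $i<l<j$). *)

theory Defs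
  imports "HOL-Analysis.Analysis"
begin

definition refl :: "'a::euclidean_space \<Rightarrow> 'a \<Rightarrow> 'a" where
  "refl a x = x - (2 * (x \<bullet> a) / (a \<bullet> a)) *\<^sub>R a"

definition refl_prod :: "'a::euclidean_space list \<Rightarrow> 'a \<Rightarrow> 'a" where
  "refl_prod bs = foldr (\<lambda>b f. refl b \<circ> f) bs id"

text \<open>(Reduced, crystallographic) root system; the ambient space is its span.\<close>
definition root_system :: "'a::euclidean_space set \<Rightarrow> bool" where
  "root_system Phi \<longleftrightarrow> finite Phi \<and> 0 \<notin> Phi
     \<and> (\<forall>a\<in>Phi. refl a ` Phi \<subseteq> Phi)
     \<and> (\<forall>a\<in>Phi. \<forall>b\<in>Phi. 2 * (b \<bullet> a) / (a \<bullet> a) \<in> \<int>)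
     \<and> (\<forall>a\<in>Phi. \<forall>c::real. c *\<^sub>R a \<in> Phi \<longrightarrow> c = 1 \<or> c = -1)"

definition indecomposable :: "'a::euclidean_space set \<Rightarrow> bool" where
  "indecomposable Phi \<longleftrightarrow> Phi \<noteq> {} \<and>
     \<not> (\<exists>A B. A \<noteq> {} \<and> B \<noteq> {} \<and> A \<union> B = Phi \<and> A \<inter> B = {}
              \<and> (\<forall>a\<in>A. \<forall>b\<in>B. a \<bullet> b = 0))"

definition is_base :: "'a::euclidean_space set \<Rightarrow> 'a set \<Rightarrow> bool" where
  "is_base Phi Sim \<longleftrightarrow> Sim \<subseteq> Phi \<and> independent Sim \<and>
     (\<forall>a\<in>Phi. \<exists>c::'a \<Rightarrow> real. a = (\<Sum>p\<in>Sim. c p *\<^sub>R p) \<and> (\<forall>p\<in>Sim. c p \<in> \<int>) \<and>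
        ((\<forall>p\<in>Sim. c p \<ge> 0) \<or> (\<forall>p\<in>Sim. c p \<le> 0)))"

definition pos_roots :: "'a::euclidean_space set \<Rightarrow> 'a set \<Rightarrow> 'a set" where
  "pos_roots Phi Sim = {a\<in>Phi. \<exists>c::'a \<Rightarrow> real. a = (\<Sum>p\<in>Sim. c p *\<^sub>R p) \<and> (\<forall>p\<in>Sim. c p \<ge> 0)}"

text \<open>Weyl group: generated by all reflections s_a, a in Phi (these are involutions,
  so the generated group is the set of finite products).\<close>
definition weyl_group :: "'a::euclidean_space set \<Rightarrow> ('a \<Rightarrow> 'a) set" where
  "weyl_group Phi = {refl_prod bs | bs. set bs \<subseteq> Phi}"

definition weyl_length :: "'a::euclidean_space set \<Rightarrow> ('a \<Rightarrow> 'a) \<Rightarrow> nat" where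
  "weyl_length Sim w = (LEAST k. \<exists>bs. set bs \<subseteq> Sim \<and> length bs = k \<and> refl_prod bs = w)"

definition longest_elt :: "'a::euclidean_space set \<Rightarrow> 'a set \<Rightarrow> ('a \<Rightarrow> 'a)" where
  "longest_elt Phi Sim = (THE w. w \<in> weyl_group Phi \<and>
       (\<forall>v\<in>weyl_group Phi. weyl_length Sim v \<le> weyl_length Sim w))"

definition reduced_expr_w0 :: "'a::euclidean_space set \<Rightarrow> 'a set \<Rightarrow> 'a list \<Rightarrow> bool" where
  "reduced_expr_w0 Phi Sim bs \<longleftrightarrow> set bs \<subseteq> Sim \<and> refl_prod bs = longest_elt Phi Sim
     \<and> length bs = weyl_length Sim (longest_elt Phi Sim)"

text \<open>gamma i (0-based, i.e. gamma_{i+1} in the paper) = s_{b1}...s_{bi}(b_{i+1}).\<close>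
definition gamma :: "'a::euclidean_space list \<Rightarrow> nat \<Rightarrow> 'a" where
  "gamma bs i = refl_prod (take i bs) (bs ! i)"

definition compatible_total_order :: "'a::real_vector set \<Rightarrow> ('a \<Rightarrow> 'a \<Rightarrow> bool) \<Rightarrow> bool" where
  "compatible_total_order S le \<longleftrightarrow>
     (\<forall>x\<in>S. le x x) \<and>
     (\<forall>x\<in>S. \<forall>y\<in>S. le x y \<and> le y x \<longrightarrow> x = y) \<and>
     (\<forall>x\<in>S. \<forall>y\<in>S. \<forall>z\<in>S. le x y \<and> le y z \<longrightarrow> le x z) \<and>
     (\<forall>x\<in>S. \<forall>y\<in>S. le x y \<or> le y x) \<and>
     (\<forall>x\<in>S. \<forall>y\<in>S. \<forall>z\<in>S. le x y \<longrightarrow> le (x + z) (y + z)) \<and>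
     (\<forall>x\<in>S. \<forall>y\<in>S. \<forall>c::real. c > 0 \<and> le x y \<longrightarrow> le (c *\<^sub>R x) (c *\<^sub>R y))"

end

theory Submission
  imports Defs
begin

section \<open>Reflections\<close>

lemma refl_linear: "linear (refl a)"
  unfolding refl_def
  by (rule linearI) (auto simp: inner_add_left algebra_simps add_divide_distrib
      scaleR_add_left[symmetric] simp del: scaleR_add_left)

lemma refl_invol: "a \<noteq> 0 \<Longrightarrow> refl a (refl a x) = x"
  unfolding refl_def by (simp add: inner_diff_left algebra_simps)

lemma refl_self: "a \<noteq> 0 \<Longrightarrow> refl a a = - a"
  unfolding refl_def by (simp add: algebra_simps scaleR_2)

lemma refl_inner: "a \<noteq> 0 \<Longrightarrow> refl a x \<bullet> refl a y = x \<bullet> y"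
  unfolding refl_def by (simp add: inner_diff_left inner_diff_right algebra_simps inner_commute)

lemma refl_neg: "refl (- a) = refl a"
  unfolding refl_def by auto

lemma refl_prod_Nil[simp]: "refl_prod [] = id"
  by (simp add: refl_prod_def)

lemma refl_prod_Cons[simp]: "refl_prod (b # bs) = refl b \<circ> refl_prod bs"
  by (simp add: refl_prod_def)

lemma refl_prod_append: "refl_prod (xs @ ys) = refl_prod xs \<circ> refl_prod ys"
  by (induction xs) auto

lemma refl_prod_linear: "linear (refl_prod bs)"
proof (induction bs)
  case (Cons b bs)
  then show ?case unfolding refl_prod_Cons using refl_linear linear_compose by blast
qed (simp add: linear_id[unfolded id_def])

lemma refl_prod_inner: "0 \<notin> set bs \<Longrightarrow> refl_prod bs x \<bullet> refl_prod bs y = x \<bullet> y"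
  by (induction bs arbitrary: x y) (auto simp: refl_inner)

lemma refl_prod_rev1: "0 \<notin> set bs \<Longrightarrow> refl_prod (rev bs) (refl_prod bs x) = x"
  by (induction bs arbitrary: x) (auto simp: refl_invol refl_prod_append)

lemma refl_prod_rev2: "0 \<notin> set bs \<Longrightarrow> refl_prod bs (refl_prod (rev bs) x) = x"
  using refl_prod_rev1[of "rev bs"] by simp

lemma conj_refl:
  assumes "linear y" "\<And>u v. y u \<bullet> y v = u \<bullet> v"
  shows "refl (y a) (y x) = y (refl a x)"
  unfolding refl_def using assms by (simp add: linear_diff linear_scale)

section \<open>Root system locale\<close>

locale rsys =
  fixes Phi Sim :: "'a::euclidean_space set" and f :: "'a \<Rightarrow> real"
  assumes rs: "root_system Phi" and base: "is_base Phi Sim"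
    and flin: "linear f" and f1: "\<And>p. p \<in> Sim \<Longrightarrow> f p = 1"
begin

lemma finPhi: "finite Phi" using rs by (simp add: root_system_def)
lemma zPhi: "0 \<notin> Phi" using rs by (simp add: root_system_def)
lemma reflPhi: "a \<in> Phi \<Longrightarrow> b \<in> Phi \<Longrightarrow> refl a b \<in> Phi"
  using rs by (auto simp: root_system_def)
lemma intPhi: "a \<in> Phi \<Longrightarrow> b \<in> Phi \<Longrightarrow> 2 * (b \<bullet> a) / (a \<bullet> a) \<in> \<int>"
  using rs by (auto simp: root_system_def)
lemma multPhi: "a \<in> Phi \<Longrightarrow> c *\<^sub>R a \<in> Phi \<Longrightarrow> c = 1 \<or> c = -1"
  using rs by (auto simp: root_system_def)
lemma SimPhi: "Sim \<subseteq> Phi" using base by (simp add: is_base_def)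
lemma finSim: "finite Sim" using SimPhi finPhi finite_subset by blast
lemma indSim: "independent Sim" using base by (simp add: is_base_def)
lemma negPhi: "a \<in> Phi \<Longrightarrow> - a \<in> Phi"
  using reflPhi[of a a] refl_self[of a] zPhi by fastforce

lemma coef: "a \<in> Phi \<Longrightarrow> \<exists>c::'a \<Rightarrow> real. a = (\<Sum>p\<in>Sim. c p *\<^sub>R p) \<and> (\<forall>p\<in>Sim. c p \<in> \<int>) \<and>
        ((\<forall>p\<in>Sim. c p \<ge> 0) \<or> (\<forall>p\<in>Sim. c p \<le> 0))"
  using base by (simp add: is_base_def)

lemma uniq:
  assumes "(\<Sum>p\<in>Sim. c p *\<^sub>R p) = (\<Sum>p\<in>Sim. d p *\<^sub>R p)" "q \<in> Sim"
  shows "c q = d q"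
proof (rule ccontr)
  assume "c q \<noteq> d q"
  have "(\<Sum>p\<in>Sim. (c p - d p) *\<^sub>R p) = 0"
    using assms(1) by (simp add: scaleR_diff_left sum_subtractf)
  moreover have "\<exists>v\<in>Sim. c v - d v \<noteq> 0" using \<open>c q \<noteq> d q\<close> assms(2) by auto
  ultimately have "dependent Sim"
    apply (subst dependent_finite[OF finSim])
    apply (rule exI[of _ "\<lambda>p. c p - d p"])
    by simp
  with indSim show False by simp
qed

lemma f_sum: "f (\<Sum>p\<in>Sim. c p *\<^sub>R p) = (\<Sum>p\<in>Sim. c p)"
  using flin f1 by (simp add: linear_sum linear_scale)

lemma f_int: "a \<in> Phi \<Longrightarrow> f a \<in> \<int>"
proof -
  assume "a \<in> Phi"
  then obtain c where c: "a = (\<Sum>p\<in>Sim. c p *\<^sub>R p)" "\<forall>p\<in>Sim. c p \<in> \<int>" using coef by blast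
  then show ?thesis using f_sum by (simp add: Ints_sum)
qed

lemma f_ne: "a \<in> Phi \<Longrightarrow> f a \<noteq> 0"
proof
  assume a: "a \<in> Phi" "f a = 0"
  then obtain c where c: "a = (\<Sum>p\<in>Sim. c p *\<^sub>R p)"
    "(\<forall>p\<in>Sim. c p \<ge> 0) \<or> (\<forall>p\<in>Sim. c p \<le> 0)" using coef by blast
  have s: "(\<Sum>p\<in>Sim. c p) = 0" using a c f_sum by simp
  have "\<forall>p\<in>Sim. c p = 0"
  proof (cases "\<forall>p\<in>Sim. c p \<ge> 0")
    case True then show ?thesis using s sum_nonneg_eq_0_iff[OF finSim] by blast
  next
    case False
    then have "\<forall>p\<in>Sim. - c p \<ge> 0" using c(2) by auto
    moreover have "(\<Sum>p\<in>Sim. - c p) = 0" using s by (simp add: sum_negf)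
    ultimately show ?thesis using sum_nonneg_eq_0_iff[OF finSim, of "\<lambda>p. - c p"] by auto
  qed
  then have "a = 0" using c(1) by simp
  with a zPhi show False by simp
qed

definition P where "P = {a\<in>Phi. 0 < f a}"

lemma finP: "finite P" using finPhi by (simp add: P_def)

lemma notP: "a \<in> Phi \<Longrightarrow> a \<notin> P \<Longrightarrow> - a \<in> P"
  using f_ne[of a] negPhi[of a] flin by (auto simp: P_def linear_neg)

lemma negP: "a \<in> P \<Longrightarrow> - a \<notin> P"
  using flin by (auto simp: P_def linear_neg)

lemma notP_neg: "a \<in> Phi \<Longrightarrow> a \<notin> P \<Longrightarrow> f a \<le> -1"
proof -
  assume a: "a \<in> Phi" "a \<notin> P"
  then have "f a < 0" using f_ne[of a] by (auto simp: P_def)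
  moreover obtain k where "f a = of_int k" using f_int[OF a(1)] Ints_cases by blast
  ultimately show ?thesis by simp
qed

lemma P_coef: "a \<in> P \<Longrightarrow> \<exists>c. a = (\<Sum>p\<in>Sim. c p *\<^sub>R p) \<and> (\<forall>p\<in>Sim. c p \<in> \<int> \<and> c p \<ge> 0)"
proof -
  assume a: "a \<in> P"
  then have "a \<in> Phi" by (simp add: P_def)
  then obtain c where c: "a = (\<Sum>p\<in>Sim. c p *\<^sub>R p)" "\<forall>p\<in>Sim. c p \<in> \<int>"
    "(\<forall>p\<in>Sim. c p \<ge> 0) \<or> (\<forall>p\<in>Sim. c p \<le> 0)" using coef by blast
  have "\<not> (\<forall>p\<in>Sim. c p \<le> 0) \<or> (\<forall>p\<in>Sim. c p \<ge> 0)"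
  proof (rule ccontr)
    assume "\<not> ?thesis"
    then have "(\<Sum>p\<in>Sim. c p) \<le> 0" by (simp add: sum_nonpos)
    with a c f_sum show False by (auto simp: P_def)
  qed
  then show ?thesis using c by blast
qed

lemma SimP: "Sim \<subseteq> P" using SimPhi f1 by (auto simp: P_def)

lemma pos_roots_eq: "pos_roots Phi Sim = P"
proof
  show "P \<subseteq> pos_roots Phi Sim" using P_coef by (auto simp: pos_roots_def P_def)
next
  show "pos_roots Phi Sim \<subseteq> P"
  proof
    fix a assume "a \<in> pos_roots Phi Sim"
    then obtain c where c: "a \<in> Phi" "a = (\<Sum>p\<in>Sim. c p *\<^sub>R p)" "\<forall>p\<in>Sim. c p \<ge> 0"
      by (auto simp: pos_roots_def)
    then have "f a \<ge> 0" using f_sum by (simp add: sum_nonneg)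
    with f_ne[OF c(1)] c(1) show "a \<in> P" by (auto simp: P_def)
  qed
qed

lemma Sim_nz: "p \<in> Sim \<Longrightarrow> p \<noteq> 0" using SimPhi zPhi by blast

lemma sum_single: "q \<in> Sim \<Longrightarrow> (\<forall>p\<in>Sim. p \<noteq> q \<longrightarrow> c p = 0) \<Longrightarrow> (\<Sum>p\<in>Sim. c p *\<^sub>R p) = c q *\<^sub>R q"
proof -
  assume q: "q \<in> Sim" and z: "\<forall>p\<in>Sim. p \<noteq> q \<longrightarrow> c p = 0"
  have "(\<Sum>p\<in>Sim. c p *\<^sub>R p) = (\<Sum>p\<in>Sim. if p = q then c q *\<^sub>R q else 0)"
    by (rule sum.cong) (use z in auto)
  also have "\<dots> = c q *\<^sub>R q" using q finSim by simp
  finally show ?thesis .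
qed

lemma simple_perm:
  assumes al: "\<alpha> \<in> Sim" and b: "\<beta> \<in> P" "\<beta> \<noteq> \<alpha>"
  shows "refl \<alpha> \<beta> \<in> P"
proof (rule ccontr)
  assume nP: "refl \<alpha> \<beta> \<notin> P"
  have aPhi: "\<alpha> \<in> Phi" using al SimPhi by blast
  have bPhi: "\<beta> \<in> Phi" using b by (simp add: P_def)
  have rP: "refl \<alpha> \<beta> \<in> Phi" using reflPhi aPhi bPhi by blast
  obtain c where c: "\<beta> = (\<Sum>p\<in>Sim. c p *\<^sub>R p)" "\<forall>p\<in>Sim. c p \<in> \<int> \<and> c p \<ge> 0"
    using P_coef[OF b(1)] by blast
  obtain d where d: "- refl \<alpha> \<beta> = (\<Sum>p\<in>Sim. d p *\<^sub>R p)" "\<forall>p\<in>Sim. d p \<in> \<int> \<and> d p \<ge> 0"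
    using P_coef[OF notP[OF rP nP]] by blast
  define k where "k = 2 * (\<beta> \<bullet> \<alpha>) / (\<alpha> \<bullet> \<alpha>)"
  have r: "refl \<alpha> \<beta> = \<beta> - k *\<^sub>R \<alpha>" by (simp add: refl_def k_def)
  have "(\<Sum>p\<in>Sim. (c p + d p) *\<^sub>R p) = \<beta> + - refl \<alpha> \<beta>"
    using c(1) d(1) by (simp add: scaleR_add_left sum.distrib)
  also have "\<dots> = k *\<^sub>R \<alpha>" using r by simp
  also have "\<dots> = (\<Sum>p\<in>Sim. (if p = \<alpha> then k else 0) *\<^sub>R p)"
    using sum_single[OF al, of "\<lambda>p. if p = \<alpha> then k else 0"] by simp
  finally have eq: "(\<Sum>p\<in>Sim. (c p + d p) *\<^sub>R p) = (\<Sum>p\<in>Sim. (if p = \<alpha> then k else 0) *\<^sub>R p)" .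
  have "\<forall>p\<in>Sim. p \<noteq> \<alpha> \<longrightarrow> c p = 0"
  proof (intro ballI impI)
    fix p assume p: "p \<in> Sim" "p \<noteq> \<alpha>"
    have "c p + d p = 0" using uniq[OF eq p(1)] p(2) by simp
    then show "c p = 0" using c(2) d(2) p(1) by (meson add_nonneg_eq_0_iff)
  qed
  then have "\<beta> = c \<alpha> *\<^sub>R \<alpha>" using c(1) sum_single[OF al] by simp
  then have "c \<alpha> = 1 \<or> c \<alpha> = -1" using multPhi[OF aPhi] bPhi by simp
  then have "c \<alpha> = 1" using c(2) al by force
  then show False using \<open>\<beta> = c \<alpha> *\<^sub>R \<alpha>\<close> b(2) by simp
qed

lemma rp_Phi: "set xs \<subseteq> Phi \<Longrightarrow> a \<in> Phi \<Longrightarrow> refl_prod xs a \<in> Phi"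
  by (induction xs arbitrary: a) (auto intro: reflPhi)

lemma rp_nz: "set xs \<subseteq> Phi \<Longrightarrow> 0 \<notin> set xs" using zPhi by blast

definition ninv :: "('a \<Rightarrow> 'a) \<Rightarrow> nat" where
  "ninv y = card {\<beta>\<in>P. y \<beta> \<notin> P}"

lemma ninv_le: "ninv y \<le> card P"
  unfolding ninv_def using finP by (intro card_mono) auto

lemma step:
  assumes yl: "linear y" and yP: "\<And>a. a \<in> Phi \<Longrightarrow> y a \<in> Phi" and al: "\<alpha> \<in> Sim"
  shows "y \<alpha> \<in> P \<Longrightarrow> ninv (y \<circ> refl \<alpha>) = ninv y + 1"
    and "y \<alpha> \<notin> P \<Longrightarrow> ninv (y \<circ> refl \<alpha>) + 1 = ninv y"
proof -
  define N where "N = {\<beta>\<in>P. y \<beta> \<notin> P}"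
  define N' where "N' = {\<beta>\<in>P. y (refl \<alpha> \<beta>) \<notin> P}"
  have n1: "ninv y = card N" by (simp add: ninv_def N_def)
  have n2: "ninv (y \<circ> refl \<alpha>) = card N'" by (simp add: ninv_def N'_def)
  have finN: "finite N" "finite N'" using finP by (auto simp: N_def N'_def)
  have anz: "\<alpha> \<noteq> 0" using Sim_nz al by blast
  have aP: "\<alpha> \<in> P" using SimP al by blast
  have ya: "y \<alpha> \<in> Phi" using yP al SimPhi by blast
  have eq: "N' - {\<alpha>} = refl \<alpha> ` (N - {\<alpha>})"
  proof
    show "N' - {\<alpha>} \<subseteq> refl \<alpha> ` (N - {\<alpha>})"
    proof
      fix x assume x: "x \<in> N' - {\<alpha>}"
      define z where "z = refl \<alpha> x"
      have zP: "z \<in> P" using simple_perm[OF al] x by (auto simp: z_def N'_def)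
      have "z \<noteq> \<alpha>"
      proof
        assume "z = \<alpha>"
        then have "x = - \<alpha>" using refl_invol[OF anz, of x] refl_self[OF anz] by (simp add: z_def)
        then show False using x negP[OF aP] by (auto simp: N'_def)
      qed
      moreover have "x = refl \<alpha> z" using refl_invol[OF anz] by (simp add: z_def)
      moreover have "y z \<notin> P" using x by (simp add: N'_def z_def)
      ultimately have "z \<in> N - {\<alpha>}" "x = refl \<alpha> z" using zP by (auto simp: N_def)
      then show "x \<in> refl \<alpha> ` (N - {\<alpha>})" by (rule rev_image_eqI)
    qed
  next
    show "refl \<alpha> ` (N - {\<alpha>}) \<subseteq> N' - {\<alpha>}"
    proof
      fix x assume "x \<in> refl \<alpha> ` (N - {\<alpha>})"
      then obtain z where z: "z \<in> N" "z \<noteq> \<alpha>" "x = refl \<alpha> z" by blast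
      have xP: "x \<in> P" using simple_perm[OF al] z by (auto simp: N_def)
      have "x \<noteq> \<alpha>"
      proof
        assume "x = \<alpha>"
        then have "z = - \<alpha>" using refl_invol[OF anz, of z] refl_self[OF anz] z(3) by simp
        then show False using z negP[OF aP] by (auto simp: N_def)
      qed
      then show "x \<in> N' - {\<alpha>}" using xP z refl_invol[OF anz] by (auto simp: N_def N'_def)
    qed
  qed
  have inj: "inj_on (refl \<alpha>) (N - {\<alpha>})"
    by (rule inj_on_inverseI[where g = "refl \<alpha>"]) (simp add: refl_invol[OF anz])
  have cd: "card (N' - {\<alpha>}) = card (N - {\<alpha>})" using eq card_image[OF inj] by simp
  have ym: "y (refl \<alpha> \<alpha>) = - y \<alpha>" using refl_self[OF anz] yl by (simp add: linear_neg)
  show "y \<alpha> \<in> P \<Longrightarrow> ninv (y \<circ> refl \<alpha>) = ninv y + 1"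
  proof -
    assume yaP: "y \<alpha> \<in> P"
    have "\<alpha> \<in> N'" using ym negP[OF yaP] aP by (simp add: N'_def)
    moreover have "\<alpha> \<notin> N" using yaP by (simp add: N_def)
    ultimately have "card N' = Suc (card (N' - {\<alpha>}))" "N - {\<alpha>} = N"
      using card.remove[OF finN(2)] by auto
    then show ?thesis using n1 n2 cd by simp
  qed
  show "y \<alpha> \<notin> P \<Longrightarrow> ninv (y \<circ> refl \<alpha>) + 1 = ninv y"
  proof -
    assume yaP: "y \<alpha> \<notin> P"
    have "\<alpha> \<notin> N'" using ym notP[OF ya yaP] by (simp add: N'_def)
    moreover have "\<alpha> \<in> N" using yaP aP by (simp add: N_def)
    ultimately have "card N = Suc (card (N - {\<alpha>}))" "N' - {\<alpha>} = N'"
      using card.remove[OF finN(1)] by auto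
    then show ?thesis using n1 n2 cd by simp
  qed
qed

lemma rp_snoc: "refl_prod (xs @ [a]) = refl_prod xs \<circ> refl a" by (simp add: refl_prod_append)

lemma SPhi: "set xs \<subseteq> Sim \<Longrightarrow> set xs \<subseteq> Phi" using SimPhi by blast

lemma step_rp:
  assumes "set xs \<subseteq> Phi" "\<alpha> \<in> Sim"
  shows "refl_prod xs \<alpha> \<in> P \<Longrightarrow> ninv (refl_prod (xs @ [\<alpha>])) = ninv (refl_prod xs) + 1"
    and "refl_prod xs \<alpha> \<notin> P \<Longrightarrow> ninv (refl_prod (xs @ [\<alpha>])) + 1 = ninv (refl_prod xs)"
proof -
  note s = step[OF refl_prod_linear rp_Phi[OF assms(1)] assms(2)]
  show "refl_prod xs \<alpha> \<in> P \<Longrightarrow> ninv (refl_prod (xs @ [\<alpha>])) = ninv (refl_prod xs) + 1"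
    unfolding rp_snoc by (rule s(1))
  show "refl_prod xs \<alpha> \<notin> P \<Longrightarrow> ninv (refl_prod (xs @ [\<alpha>])) + 1 = ninv (refl_prod xs)"
    unfolding rp_snoc by (rule s(2))
qed



lemma ninv_id: "ninv id = 0" unfolding ninv_def by auto

lemma ninv_len: "set xs \<subseteq> Sim \<Longrightarrow> ninv (refl_prod xs) \<le> length xs"
proof (induction xs rule: rev_induct)
  case Nil then show ?case by (simp add: ninv_def)
next
  case (snoc a xs)
  then have xs: "set xs \<subseteq> Sim" "a \<in> Sim" by auto
  show ?case
  proof (cases "refl_prod xs a \<in> P")
    case True
    then show ?thesis using step_rp(1)[OF SPhi[OF xs(1)] xs(2)] snoc.IH[OF xs(1)] by simp
  next
    case False
    then show ?thesis using step_rp(2)[OF SPhi[OF xs(1)] xs(2)] snoc.IH[OF xs(1)] by simp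
  qed
qed

lemma ninv_inv_le:
  assumes xs: "set xs \<subseteq> Phi"
  shows "ninv (refl_prod xs) \<le> ninv (refl_prod (rev xs))"
proof -
  let ?x = "refl_prod xs" and ?x' = "refl_prod (rev xs)"
  define N where "N = {\<beta>\<in>P. ?x \<beta> \<notin> P}"
  define N2 where "N2 = {\<beta>\<in>P. ?x' \<beta> \<notin> P}"
  have inv: "\<And>u. ?x' (?x u) = u" using refl_prod_rev1[OF rp_nz[OF xs]] .
  have inj: "inj_on (\<lambda>\<beta>. - ?x \<beta>) N"
    by (rule inj_on_inverseI[where g = "\<lambda>u. ?x' (- u)"])
       (simp add: linear_neg[OF refl_prod_linear] inv)
  have sub: "(\<lambda>\<beta>. - ?x \<beta>) ` N \<subseteq> N2"
  proof
    fix u assume "u \<in> (\<lambda>\<beta>. - ?x \<beta>) ` N"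
    then obtain \<beta> where b: "\<beta> \<in> P" "?x \<beta> \<notin> P" "u = - ?x \<beta>" by (auto simp: N_def)
    have "?x \<beta> \<in> Phi" using rp_Phi[OF xs] b(1) by (simp add: P_def)
    then have "u \<in> P" using notP b by simp
    moreover have "?x' u = - \<beta>" using b(3) by (simp add: linear_neg[OF refl_prod_linear] inv)
    ultimately show "u \<in> N2" using negP[OF b(1)] by (simp add: N2_def)
  qed
  have "card N \<le> card N2" using card_inj_on_le[OF inj sub] finP by (simp add: N2_def)
  then show ?thesis by (simp add: ninv_def N_def N2_def)
qed

lemma ninv_rev: "set xs \<subseteq> Phi \<Longrightarrow> ninv (refl_prod (rev xs)) = ninv (refl_prod xs)"
  using ninv_inv_le[of xs] ninv_inv_le[of "rev xs"] by simp

lemma rp_inner: "set xs \<subseteq> Phi \<Longrightarrow> refl_prod xs u \<bullet> refl_prod xs v = u \<bullet> v"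
  using refl_prod_inner[OF rp_nz] by blast

lemma exchange:
  "set xs \<subseteq> Sim \<Longrightarrow> \<alpha> \<in> Sim \<Longrightarrow> refl_prod xs \<alpha> \<notin> P \<Longrightarrow>
    \<exists>us c ws. xs = us @ c # ws \<and> refl_prod xs \<circ> refl \<alpha> = refl_prod (us @ ws)"
proof (induction xs)
  case Nil
  then show ?case using SimP by auto
next
  case (Cons b ys)
  have ys: "set ys \<subseteq> Sim" and b: "b \<in> Sim" using Cons.prems by auto
  let ?y = "refl_prod ys"
  show ?case
  proof (cases "?y \<alpha> \<in> P")
    case False
    from Cons.IH[OF ys Cons.prems(2) False] obtain us c ws where
      u: "ys = us @ c # ws" "?y \<circ> refl \<alpha> = refl_prod (us @ ws)" by blast
    have "refl_prod (b # ys) \<circ> refl \<alpha> = refl b \<circ> (?y \<circ> refl \<alpha>)" by (simp add: comp_assoc)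
    also have "\<dots> = refl_prod ((b # us) @ ws)" using u(2) by (simp add: refl_prod_append)
    finally have "refl_prod (b # ys) \<circ> refl \<alpha> = refl_prod ((b # us) @ ws)" .
    moreover have "b # ys = (b # us) @ c # ws" using u(1) by simp
    ultimately show ?thesis by blast
  next
    case True
    have "refl b (?y \<alpha>) \<notin> P" using Cons.prems(3) by simp
    then have yb: "?y \<alpha> = b" using simple_perm[OF b True] by blast
    have "refl_prod (b # ys) \<circ> refl \<alpha> = ?y"
    proof
      fix x
      have "refl (?y \<alpha>) (?y (refl \<alpha> x)) = ?y (refl \<alpha> (refl \<alpha> x))"
        by (rule conj_refl[OF refl_prod_linear rp_inner[OF SPhi[OF ys]]])
      also have "\<dots> = ?y x" by (simp add: refl_invol[OF Sim_nz[OF Cons.prems(2)]])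
      finally show "(refl_prod (b # ys) \<circ> refl \<alpha>) x = ?y x" using yb by simp
    qed
    moreover have "b # ys = [] @ b # ys" by simp
    ultimately show ?thesis by (metis append_Nil)
  qed
qed

lemma reduce: "set xs \<subseteq> Sim \<Longrightarrow>
  \<exists>zs. set zs \<subseteq> Sim \<and> refl_prod zs = refl_prod xs \<and> length zs \<le> ninv (refl_prod xs)"
proof (induction xs rule: rev_induct)
  case Nil then show ?case by (intro exI[of _ "[]"]) (simp add: ninv_id)
next
  case (snoc a xs)
  then have xs: "set xs \<subseteq> Sim" "a \<in> Sim" by auto
  from snoc.IH[OF xs(1)] obtain zs where
    z: "set zs \<subseteq> Sim" "refl_prod zs = refl_prod xs" "length zs \<le> ninv (refl_prod xs)" by blast
  show ?case
  proof (cases "refl_prod xs a \<in> P")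
    case True
    then have "ninv (refl_prod (xs @ [a])) = ninv (refl_prod xs) + 1"
      using step_rp(1)[OF SPhi[OF xs(1)] xs(2)] by simp
    moreover have "refl_prod (zs @ [a]) = refl_prod (xs @ [a])" using z(2) by (simp only: rp_snoc)
    moreover have "length (zs @ [a]) = length zs + 1" by simp
    moreover have "set (zs @ [a]) \<subseteq> Sim" using z(1) xs(2) by simp
    ultimately show ?thesis using z(3) by (metis add_le_mono1)
  next
    case False
    then have n: "ninv (refl_prod (xs @ [a])) + 1 = ninv (refl_prod xs)"
      using step_rp(2)[OF SPhi[OF xs(1)] xs(2)] by simp
    from exchange[OF z(1) xs(2)] False z(2) obtain us c ws where
      e: "zs = us @ c # ws" "refl_prod zs \<circ> refl a = refl_prod (us @ ws)" by auto
    have "refl_prod (us @ ws) = refl_prod (xs @ [a])" using e(2) z(2) by (simp add: rp_snoc)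
    moreover have "length (us @ ws) \<le> ninv (refl_prod (xs @ [a]))" using e(1) z(3) n by simp
    moreover have "set (us @ ws) \<subseteq> Sim" using e(1) z(1) by auto
    ultimately show ?thesis by blast
  qed
qed

lemma wl: "set xs \<subseteq> Sim \<Longrightarrow> weyl_length Sim (refl_prod xs) = ninv (refl_prod xs)"
proof -
  assume xs: "set xs \<subseteq> Sim"
  obtain zs where z: "set zs \<subseteq> Sim" "refl_prod zs = refl_prod xs" "length zs \<le> ninv (refl_prod xs)"
    using reduce[OF xs] by blast
  have "ninv (refl_prod zs) \<le> length zs" using ninv_len[OF z(1)] .
  then have lz: "length zs = ninv (refl_prod xs)" using z by simp
  show ?thesis unfolding weyl_length_def
  proof (rule Least_equality)
    show "\<exists>bs. set bs \<subseteq> Sim \<and> length bs = ninv (refl_prod xs) \<and> refl_prod bs = refl_prod xs"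
      using z lz by blast
  next
    fix y assume "\<exists>bs. set bs \<subseteq> Sim \<and> length bs = y \<and> refl_prod bs = refl_prod xs"
    then obtain bs where "set bs \<subseteq> Sim" "length bs = y" "refl_prod bs = refl_prod xs" by blast
    then show "ninv (refl_prod xs) \<le> y" using ninv_len by metis
  qed
qed

lemma conj_simple_n:
  "\<forall>a\<in>P. f a < real n \<longrightarrow> (\<exists>ws \<alpha>. set ws \<subseteq> Sim \<and> \<alpha> \<in> Sim \<and> a = refl_prod ws \<alpha>)"
proof (induction n)
  case 0
  then show ?case by (auto simp: P_def)
next
  case (Suc n)
  show ?case
  proof (intro ballI impI)
    fix a assume aP: "a \<in> P" and fa: "f a < real (Suc n)"
    show "\<exists>ws \<alpha>. set ws \<subseteq> Sim \<and> \<alpha> \<in> Sim \<and> a = refl_prod ws \<alpha>"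
    proof (cases "a \<in> Sim")
      case True
      then show ?thesis by (intro exI[of _ "[]"] exI[of _ a]) simp
    next
      case False
      have aPhi: "a \<in> Phi" using aP by (simp add: P_def)
      obtain c where c: "a = (\<Sum>p\<in>Sim. c p *\<^sub>R p)" "\<forall>p\<in>Sim. c p \<in> \<int> \<and> c p \<ge> 0"
        using P_coef[OF aP] by blast
      have "a \<noteq> 0" using aPhi zPhi by blast
      then have aa: "a \<bullet> a > 0" by simp
      have "a \<bullet> a = a \<bullet> (\<Sum>p\<in>Sim. c p *\<^sub>R p)" using c(1) by simp
      also have "\<dots> = (\<Sum>p\<in>Sim. c p * (a \<bullet> p))" by (simp add: inner_sum_right)
      finally have aas: "a \<bullet> a = (\<Sum>p\<in>Sim. c p * (a \<bullet> p))" .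
      obtain \<alpha> where al: "\<alpha> \<in> Sim" "a \<bullet> \<alpha> > 0"
      proof (rule ccontr)
        assume "\<not> thesis"
        then have "\<forall>p\<in>Sim. a \<bullet> p \<le> 0" using that by force
        then have "(\<Sum>p\<in>Sim. c p * (a \<bullet> p)) \<le> 0"
          using c(2) by (intro sum_nonpos) (simp add: mult_nonneg_nonpos)
        with aa aas show False by simp
      qed
      have alPhi: "\<alpha> \<in> Phi" using al SimPhi by blast
      define k where "k = 2 * (a \<bullet> \<alpha>) / (\<alpha> \<bullet> \<alpha>)"
      have kint: "k \<in> \<int>" using intPhi[OF alPhi aPhi] by (simp add: k_def)
      have "\<alpha> \<noteq> 0" using Sim_nz al(1) by blast
      then have "k > 0" using al(2) by (simp add: k_def)
      from kint obtain kk where kk: "k = of_int kk" using Ints_cases by blast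
      with \<open>k > 0\<close> have k1: "k \<ge> 1" by simp
      have r: "refl \<alpha> a = a - k *\<^sub>R \<alpha>" by (simp add: refl_def k_def)
      have "f (refl \<alpha> a) = f a - k * f \<alpha>" using r flin by (simp add: linear_diff linear_scale)
      then have "f (refl \<alpha> a) < real n" using f1[OF al(1)] k1 fa by simp
      moreover have "refl \<alpha> a \<in> P" using simple_perm[OF al(1) aP] False al(1) by blast
      ultimately obtain ws \<alpha>' where w: "set ws \<subseteq> Sim" "\<alpha>' \<in> Sim" "refl \<alpha> a = refl_prod ws \<alpha>'"
        using Suc.IH by blast
      have "a = refl \<alpha> (refl \<alpha> a)" using refl_invol[OF \<open>\<alpha> \<noteq> 0\<close>] by simp
      also have "\<dots> = refl_prod (\<alpha> # ws) \<alpha>'" using w(3) by simp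
      finally show ?thesis using w al(1) by (intro exI[of _ "\<alpha> # ws"] exI[of _ \<alpha>']) simp
    qed
  qed
qed

lemma conj_simple: "a \<in> P \<Longrightarrow> \<exists>ws \<alpha>. set ws \<subseteq> Sim \<and> \<alpha> \<in> Sim \<and> a = refl_prod ws \<alpha>"
proof -
  assume a: "a \<in> P"
  obtain n where "f a < real n" using reals_Archimedean2 by blast
  then show ?thesis using conj_simple_n a by blast
qed

lemma refl_word: "a \<in> Phi \<Longrightarrow> \<exists>ws. set ws \<subseteq> Sim \<and> refl a = refl_prod ws"
proof -
  assume a: "a \<in> Phi"
  obtain b where b: "b \<in> P" "refl a = refl b"
  proof (cases "a \<in> P")
    case True then show ?thesis using that by blast
  next
    case False then show ?thesis using that notP[OF a] refl_neg[of a] by metis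
  qed
  obtain ws \<alpha> where w: "set ws \<subseteq> Sim" "\<alpha> \<in> Sim" "b = refl_prod ws \<alpha>" using conj_simple[OF b(1)] by blast
  have "refl b = refl_prod (ws @ [\<alpha>] @ rev ws)"
  proof
    fix x
    have nz: "0 \<notin> set ws" using rp_nz[OF SPhi[OF w(1)]] .
    have "refl b x = refl (refl_prod ws \<alpha>) (refl_prod ws (refl_prod (rev ws) x))"
      using w(3) refl_prod_rev2[OF nz] by simp
    also have "\<dots> = refl_prod ws (refl \<alpha> (refl_prod (rev ws) x))"
      by (rule conj_refl[OF refl_prod_linear rp_inner[OF SPhi[OF w(1)]]])
    finally show "refl b x = refl_prod (ws @ [\<alpha>] @ rev ws) x" by (simp add: refl_prod_append)
  qed
  then show ?thesis using b(2) w(1) w(2) by (intro exI[of _ "ws @ [\<alpha>] @ rev ws"]) auto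
qed

lemma W_word: "w \<in> weyl_group Phi \<Longrightarrow> \<exists>ws. set ws \<subseteq> Sim \<and> w = refl_prod ws"
proof -
  assume "w \<in> weyl_group Phi"
  then obtain bs where bs: "w = refl_prod bs" "set bs \<subseteq> Phi" by (auto simp: weyl_group_def)
  have "set bs \<subseteq> Phi \<Longrightarrow> \<exists>ws. set ws \<subseteq> Sim \<and> refl_prod bs = refl_prod ws"
  proof (induction bs)
    case Nil then show ?case by (intro exI[of _ "[]"]) simp
  next
    case (Cons b bs)
    obtain ws where w: "set ws \<subseteq> Sim" "refl_prod bs = refl_prod ws" using Cons by auto
    have "b \<in> Phi" using Cons.prems by simp
    then obtain vs where v: "set vs \<subseteq> Sim" "refl b = refl_prod vs" using refl_word by blast
    show ?case using w v by (intro exI[of _ "vs @ ws"]) (simp add: refl_prod_append)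
  qed
  then show ?thesis using bs by blast
qed

lemma word_W: "set ws \<subseteq> Sim \<Longrightarrow> refl_prod ws \<in> weyl_group Phi"
  using SimPhi by (auto simp: weyl_group_def)

lemma exist_k: "k \<le> card P \<Longrightarrow> \<exists>xs. set xs \<subseteq> Sim \<and> length xs = k \<and> ninv (refl_prod xs) = k"
proof (induction k)
  case 0 then show ?case by (intro exI[of _ "[]"]) (simp add: ninv_def)
next
  case (Suc k)
  then obtain xs where xs: "set xs \<subseteq> Sim" "length xs = k" "ninv (refl_prod xs) = k" by auto
  let ?y = "refl_prod xs"
  have "\<exists>\<alpha>\<in>Sim. ?y \<alpha> \<in> P"
  proof (rule ccontr)
    assume "\<not> ?thesis"
    then have nal: "\<forall>p\<in>Sim. ?y p \<notin> P" by blast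
    have "{\<beta>\<in>P. ?y \<beta> \<notin> P} = P"
    proof (intro equalityI subsetI)
      fix \<beta> assume bP: "\<beta> \<in> P"
      obtain c where c: "\<beta> = (\<Sum>p\<in>Sim. c p *\<^sub>R p)" "\<forall>p\<in>Sim. c p \<in> \<int> \<and> c p \<ge> 0"
        using P_coef[OF bP] by blast
      have lin: "linear (f \<circ> ?y)" using linear_compose[OF refl_prod_linear flin] .
      have "f (?y \<beta>) = (f \<circ> ?y) (\<Sum>p\<in>Sim. c p *\<^sub>R p)" using c(1) by simp
      also have "\<dots> = (\<Sum>p\<in>Sim. (f \<circ> ?y) (c p *\<^sub>R p))" by (rule linear_sum[OF lin])
      also have "\<dots> = (\<Sum>p\<in>Sim. c p * f (?y p))"
        by (rule sum.cong) (simp_all add: linear_scale[OF refl_prod_linear] linear_scale[OF flin])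
      also have "\<dots> \<le> (\<Sum>p\<in>Sim. c p * (-1))"
      proof (rule sum_mono)
        fix p assume p: "p \<in> Sim"
        have "?y p \<in> Phi" using rp_Phi[OF SPhi[OF xs(1)]] p SimPhi by blast
        then have "f (?y p) \<le> -1" using notP_neg nal p by blast
        moreover have "c p \<ge> 0" using c(2) p by blast
        ultimately show "c p * f (?y p) \<le> c p * (-1)" by (rule mult_left_mono)
      qed
      also have "\<dots> = - f \<beta>" using c(1) f_sum by (simp add: sum_negf)
      finally have "f (?y \<beta>) < 0" using bP by (simp add: P_def)
      then show "\<beta> \<in> {\<beta>\<in>P. ?y \<beta> \<notin> P}" using bP by (simp add: P_def)
    qed auto
    then have "ninv ?y = card P" by (simp add: ninv_def)
    with xs(3) Suc.prems show False by simp
  qed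
  then obtain \<alpha> where al: "\<alpha> \<in> Sim" "?y \<alpha> \<in> P" by blast
  have "ninv (refl_prod (xs @ [\<alpha>])) = k + 1" using step_rp(1)[OF SPhi[OF xs(1)] al(1) al(2)] xs(3) by simp
  then show ?case using xs al by (intro exI[of _ "xs @ [\<alpha>]"]) simp
qed

lemma full_N: "set xs \<subseteq> Phi \<Longrightarrow> ninv (refl_prod xs) = card P \<Longrightarrow> \<beta> \<in> P \<Longrightarrow> refl_prod xs \<beta> \<notin> P"
proof -
  assume xs: "set xs \<subseteq> Phi" and n: "ninv (refl_prod xs) = card P" and b: "\<beta> \<in> P"
  have "{\<beta>\<in>P. refl_prod xs \<beta> \<notin> P} = P"
    using n finP by (intro card_subset_eq) (auto simp: ninv_def)
  then show ?thesis using b by blast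
qed

lemma uniq_w0:
  assumes xs: "set xs \<subseteq> Sim" and xs': "set xs' \<subseteq> Sim"
    and n: "ninv (refl_prod xs) = card P" and n': "ninv (refl_prod xs') = card P"
  shows "refl_prod xs = refl_prod xs'"
proof -
  let ?x = "refl_prod xs" and ?x' = "refl_prod xs'" and ?i = "refl_prod (rev xs')"
  have nz': "0 \<notin> set xs'" using rp_nz[OF SPhi[OF xs']] .
  have zl: "set (rev xs' @ xs) \<subseteq> Sim" using xs xs' by auto
  have "ninv (refl_prod (rev xs' @ xs)) = 0"
  proof -
    have "{\<beta>\<in>P. refl_prod (rev xs' @ xs) \<beta> \<notin> P} = {}"
    proof (rule ccontr)
      assume "\<not> ?thesis"
      then obtain \<beta> where b: "\<beta> \<in> P" "?i (?x \<beta>) \<notin> P" by (auto simp: refl_prod_append)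
      have xb: "?x \<beta> \<in> Phi" using rp_Phi[OF SPhi[OF xs]] b(1) by (simp add: P_def)
      have xbn: "?x \<beta> \<notin> P" using full_N[OF SPhi[OF xs] n b(1)] .
      have d: "?i (?x \<beta>) \<in> Phi" using rp_Phi[OF SPhi] xs' xb by (simp add: rp_Phi[OF SPhi[of "rev xs'"]])
      have md: "- ?i (?x \<beta>) \<in> P" using notP[OF d b(2)] .
      have "?x' (- ?i (?x \<beta>)) = - ?x \<beta>"
        using refl_prod_rev2[OF nz'] by (simp add: linear_neg[OF refl_prod_linear])
      moreover have "?x' (- ?i (?x \<beta>)) \<notin> P" using full_N[OF SPhi[OF xs'] n' md] .
      ultimately show False using notP[OF xb xbn] by simp
    qed
    then show ?thesis unfolding ninv_def by (metis card.empty)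
  qed
  then obtain zs where "set zs \<subseteq> Sim" "refl_prod zs = refl_prod (rev xs' @ xs)" "length zs \<le> 0"
    using reduce[OF zl] by force
  then have "id = ?i \<circ> ?x" by (simp add: refl_prod_append)
  then have idz: "\<And>t. ?i (?x t) = t" by (metis comp_apply id_apply)
  show ?thesis
  proof
    fix t
    have "?x t = ?x' (?i (?x t))" using refl_prod_rev2[OF nz'] by simp
    also have "\<dots> = ?x' t" using idz by simp
    finally show "?x t = ?x' t" .
  qed
qed

lemma longest:
  assumes xs: "set xs \<subseteq> Sim" and n: "ninv (refl_prod xs) = card P"
  shows "longest_elt Phi Sim = refl_prod xs"
  unfolding longest_elt_def
proof (rule the_equality)
  show "refl_prod xs \<in> weyl_group Phi \<and>
    (\<forall>v\<in>weyl_group Phi. weyl_length Sim v \<le> weyl_length Sim (refl_prod xs))"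
  proof (intro conjI ballI)
    show "refl_prod xs \<in> weyl_group Phi" using word_W[OF xs] .
  next
    fix v assume "v \<in> weyl_group Phi"
    then obtain ws where "set ws \<subseteq> Sim" "v = refl_prod ws" using W_word by blast
    then show "weyl_length Sim v \<le> weyl_length Sim (refl_prod xs)"
      using wl[OF xs] n wl ninv_le by metis
  qed
next
  fix w assume w: "w \<in> weyl_group Phi \<and> (\<forall>v\<in>weyl_group Phi. weyl_length Sim v \<le> weyl_length Sim w)"
  then obtain ws where ws: "set ws \<subseteq> Sim" "w = refl_prod ws" using W_word by blast
  have "weyl_length Sim (refl_prod xs) \<le> weyl_length Sim w" using w word_W[OF xs] by blast
  then have "card P \<le> ninv w" using wl[OF xs] n wl[OF ws(1)] ws(2) by simp
  then have "ninv (refl_prod ws) = card P" using ninv_le ws(2) le_antisym by blast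
  then show "w = refl_prod xs" using uniq_w0[OF ws(1) xs _ n] ws(2) by simp
qed

definition red where "red xs \<longleftrightarrow> set xs \<subseteq> Sim \<and> ninv (refl_prod xs) = length xs"

lemma red_snoc: "red (xs @ [\<alpha>]) \<Longrightarrow> red xs \<and> refl_prod xs \<alpha> \<in> P"
proof -
  assume r: "red (xs @ [\<alpha>])"
  then have xs: "set xs \<subseteq> Sim" "\<alpha> \<in> Sim" and n: "ninv (refl_prod (xs @ [\<alpha>])) = length xs + 1"
    by (auto simp: red_def)
  have "refl_prod xs \<alpha> \<in> P"
  proof (rule ccontr)
    assume "refl_prod xs \<alpha> \<notin> P"
    then have "ninv (refl_prod (xs @ [\<alpha>])) + 1 = ninv (refl_prod xs)"
      using step_rp(2)[OF SPhi[OF xs(1)] xs(2)] by blast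
    with n ninv_len[OF xs(1)] show False by simp
  qed
  moreover then have "ninv (refl_prod xs) = length xs"
    using step_rp(1)[OF SPhi[OF xs(1)] xs(2)] n by simp
  ultimately show ?thesis using xs by (simp add: red_def)
qed

lemma red_rev: "red xs \<Longrightarrow> red (rev xs)"
  unfolding red_def using ninv_rev SPhi by auto

lemma red_prefix: "red (xs @ ys) \<Longrightarrow> red xs"
proof (induction ys rule: rev_induct)
  case Nil then show ?case by simp
next
  case (snoc y ys)
  then show ?case using red_snoc[of "xs @ ys" y] by simp
qed

lemma red_suffix: "red (xs @ ys) \<Longrightarrow> red ys"
  using red_rev red_prefix[of "rev ys" "rev xs"] by (metis rev_append rev_rev_ident)

lemma red_sub: "red (xs @ ys @ zs) \<Longrightarrow> red ys"
  using red_suffix red_prefix by metis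

lemma main_signs:
  assumes r: "reduced_expr_w0 Phi Sim bs" and m: "m < card P"
  shows "\<exists>g::'a \<Rightarrow> real. linear g \<and> (\<forall>i < card P. (i < m \<longrightarrow> g (gamma bs i) > 0) \<and> (m \<le> i \<longrightarrow> g (gamma bs i) < 0))"
proof -
  obtain xs0 where x0: "set xs0 \<subseteq> Sim" "length xs0 = card P" "ninv (refl_prod xs0) = card P"
    using exist_k[of "card P"] by auto
  have lo: "longest_elt Phi Sim = refl_prod xs0" using longest[OF x0(1) x0(3)] .
  have bsS: "set bs \<subseteq> Sim" and bsp: "refl_prod bs = refl_prod xs0"
    and bsl: "length bs = weyl_length Sim (refl_prod xs0)"
    using r lo by (auto simp: reduced_expr_w0_def)
  have lb: "length bs = card P" using bsl wl[OF x0(1)] x0(3) by simp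
  have rb: "red bs" using bsS bsp x0(3) lb by (simp add: red_def)
  let ?w = "refl_prod (rev (take m bs))"
  define g where "g x = - f (?w x)" for x
  have lg: "linear g" unfolding g_def
    by (intro linearI) (simp_all add: linear_add[OF refl_prod_linear] linear_scale[OF refl_prod_linear]
        linear_add[OF flin] linear_scale[OF flin])
  have "\<forall>i < card P. (i < m \<longrightarrow> g (gamma bs i) > 0) \<and> (m \<le> i \<longrightarrow> g (gamma bs i) < 0)"
  proof (intro allI impI conjI)
    fix i assume i: "i < card P" "i < m"
    let ?b = "bs ! i"
    obtain D where D: "D = drop (Suc i) (take m bs)" by blast
    have s1: "take m bs = take i bs @ ?b # D"
      using i lb D by (metis append_take_drop_id take_Suc_conv_app_nth take_take min.absorb1
          Suc_leI append.assoc append_Cons append_Nil min.commute)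
    have s2: "bs = take i bs @ (?b # D) @ drop m bs"
      using s1 by (metis append_take_drop_id append.assoc)
    have "red (?b # D)" using red_sub rb s2 by metis
    then have "red (rev D @ [?b])" using red_rev by fastforce
    then have pos: "refl_prod (rev D) ?b \<in> P" using red_snoc by blast
    have nz: "0 \<notin> set bs" using rp_nz[OF SPhi[OF bsS]] .
    then have nzt: "0 \<notin> set (take i bs)" by (meson in_set_takeD)
    have bnz: "?b \<noteq> 0" using nz i lb by (metis nth_mem)
    have "?w (gamma bs i) = refl_prod (rev D) (refl ?b (refl_prod (rev (take i bs)) (refl_prod (take i bs) ?b)))"
      unfolding gamma_def by (subst s1) (simp add: refl_prod_append)
    also have "\<dots> = refl_prod (rev D) (- ?b)" using refl_prod_rev1[OF nzt] refl_self[OF bnz] by simp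
    also have "\<dots> = - refl_prod (rev D) ?b" by (simp add: linear_neg[OF refl_prod_linear])
    finally have "g (gamma bs i) = f (refl_prod (rev D) ?b)"
      by (simp add: g_def linear_neg[OF flin])
    then show "g (gamma bs i) > 0" using pos by (simp add: P_def)
  next
    fix i assume i: "i < card P" "m \<le> i"
    let ?b = "bs ! i" and ?E = "drop m (take i bs)"
    have s1: "take i bs = take m bs @ ?E"
      using i by (metis append_take_drop_id take_take min.absorb1)
    have s2: "bs = take m bs @ (?E @ [?b]) @ drop (Suc i) bs"
      using s1 i lb by (metis append_take_drop_id take_Suc_conv_app_nth append.assoc)
    have "red (?E @ [?b])" using red_sub rb s2 by metis
    then have pos: "refl_prod ?E ?b \<in> P" using red_snoc by blast
    have nz: "0 \<notin> set bs" using rp_nz[OF SPhi[OF bsS]] .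
    then have nzt: "0 \<notin> set (take m bs)" by (meson in_set_takeD)
    have "?w (gamma bs i) = refl_prod (rev (take m bs)) (refl_prod (take m bs) (refl_prod ?E ?b))"
      unfolding gamma_def by (subst s1) (simp add: refl_prod_append)
    also have "\<dots> = refl_prod ?E ?b" using refl_prod_rev1[OF nzt] by simp
    finally have "g (gamma bs i) = - f (refl_prod ?E ?b)" by (simp add: g_def)
    then show "g (gamma bs i) < 0" using pos by (simp add: P_def)
  qed
  then show ?thesis using lg by (intro exI[of _ g]) simp
qed

end

section \<open>Lexicographic orders\<close>

fun lexpos :: "('a::real_vector \<Rightarrow> real) list \<Rightarrow> 'a \<Rightarrow> bool" where
  "lexpos [] z = True"
| "lexpos (h # hs) z = (h z > 0 \<or> (h z = 0 \<and> lexpos hs z))"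

lemma lp0: "\<forall>h\<in>set hs. linear h \<Longrightarrow> lexpos hs 0"
  by (induction hs) (auto simp: linear_0)

lemma lp_add: "\<forall>h\<in>set hs. linear h \<Longrightarrow> lexpos hs x \<Longrightarrow> lexpos hs y \<Longrightarrow> lexpos hs (x + y)"
  by (induction hs) (auto simp: linear_add)

lemma lp_tot: "\<forall>h\<in>set hs. linear h \<Longrightarrow> lexpos hs x \<or> lexpos hs (- x)"
  by (induction hs) (auto simp: linear_neg)

lemma lp_anti: "\<forall>h\<in>set hs. linear h \<Longrightarrow> lexpos hs x \<Longrightarrow> lexpos hs (- x) \<Longrightarrow> \<forall>h\<in>set hs. h x = 0"
  by (induction hs) (auto simp: linear_neg)

lemma lp_scale: "\<forall>h\<in>set hs. linear h \<Longrightarrow> (c::real) > 0 \<Longrightarrow> lexpos hs x \<Longrightarrow> lexpos hs (c *\<^sub>R x)"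
  by (induction hs) (auto simp: linear_scale)

theorem lemma3p3p2:
  fixes Phi Sim :: "'a::euclidean_space set" and bs :: "'a list" and m :: nat
  assumes "root_system Phi" and "indecomposable Phi"
    and "is_base Phi Sim"
    and "reduced_expr_w0 Phi Sim bs"
    and "m < card (pos_roots Phi Sim)"
  shows "\<exists>le. compatible_total_order (span Phi) le \<and>
     (\<forall>i < card (pos_roots Phi Sim).
        (i < m \<longrightarrow> le 0 (gamma bs i) \<and> gamma bs i \<noteq> 0) \<and>
        (m \<le> i \<longrightarrow> le (gamma bs i) 0 \<and> gamma bs i \<noteq> 0))"
proof -
  have "independent Sim" using assms(3) by (simp add: is_base_def)
  then have "\<exists>f::'a \<Rightarrow> real. linear f \<and> (\<forall>x\<in>Sim. f x = 1)"
    by (rule linear_independent_extend)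
  then obtain f :: "'a \<Rightarrow> real" where f: "linear f" "\<forall>x\<in>Sim. f x = 1"
    by blast
  interpret rsys Phi Sim f by (rule rsys.intro) (use assms(1,3) f in auto)
  have pr: "pos_roots Phi Sim = P" by (rule pos_roots_eq)
  have mP: "m < card P" using assms(5) pr by simp
  obtain g :: "'a \<Rightarrow> real" where g: "linear g"
    "\<forall>i < card P. (i < m \<longrightarrow> g (gamma bs i) > 0) \<and> (m \<le> i \<longrightarrow> g (gamma bs i) < 0)"
    using main_signs[OF assms(4) mP] by blast
  obtain bl where bl: "set bl = (Basis :: 'a set)" using finite_list[OF finite_Basis] by blast
  define hs where "hs = g # map (\<lambda>b x. x \<bullet> b) bl"
  have lin: "\<forall>h\<in>set hs. linear h" using g(1) by (auto simp: hs_def intro: bounded_linear.linear[OF bounded_linear_inner_left])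
  define le where "le x y = lexpos hs (y - x)" for x y :: 'a
  have cto: "compatible_total_order (span Phi) le"
    unfolding compatible_total_order_def
  proof (intro conjI ballI allI impI)
    fix x show "le x x" using lp0[OF lin] by (simp add: le_def)
  next
    fix x y assume "le x y \<and> le y x"
    then have "lexpos hs (y - x)" "lexpos hs (- (y - x))" by (auto simp: le_def)
    then have "\<forall>h\<in>set hs. h (y - x) = 0" using lp_anti[OF lin] by blast
    then have "\<forall>b\<in>Basis. (y - x) \<bullet> b = 0" using bl by (auto simp: hs_def)
    then have "y - x = 0" by (simp only: euclidean_all_zero_iff)
    then show "x = y" by simp
  next
    fix x y z assume "le x y \<and> le y z"
    then show "le x z" using lp_add[OF lin, of "y - x" "z - y"] by (simp add: le_def)
  next
    fix x y show "le x y \<or> le y x" using lp_tot[OF lin, of "y - x"] by (simp add: le_def)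
  next
    fix x y z assume "le x y" then show "le (x + z) (y + z)" by (simp add: le_def)
  next
    fix x y and c :: real assume "c > 0 \<and> le x y"
    then show "le (c *\<^sub>R x) (c *\<^sub>R y)"
      using lp_scale[OF lin, of c "y - x"] by (simp add: le_def scaleR_diff_right)
  qed
  have "\<forall>i < card (pos_roots Phi Sim).
        (i < m \<longrightarrow> le 0 (gamma bs i) \<and> gamma bs i \<noteq> 0) \<and>
        (m \<le> i \<longrightarrow> le (gamma bs i) 0 \<and> gamma bs i \<noteq> 0)"
  proof (intro allI impI conjI)
    fix i assume i: "i < card (pos_roots Phi Sim)" "i < m"
    then have "g (gamma bs i) > 0" using g(2) pr by auto
    then show "le 0 (gamma bs i)" "gamma bs i \<noteq> 0"
      using linear_0[OF g(1)] by (auto simp: le_def hs_def)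
  next
    fix i assume i: "i < card (pos_roots Phi Sim)" "m \<le> i"
    then have "g (gamma bs i) < 0" using g(2) pr by auto
    then show "le (gamma bs i) 0" "gamma bs i \<noteq> 0"
      using linear_0[OF g(1)] linear_neg[OF g(1)] by (auto simp: le_def hs_def)
  qed
  with cto show ?thesis by blast
qed

end
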